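(* Let $A\in\mathbb R^{n\times n}$ with $A\neq0$, $b\in\mathbb R^n$, $U\subseteq\mathbb R^n$ compact and convex, $X_0\subseteq\mathbb R^n$ compact and convex, and $\tau\ge0$. Consider $\dot x(t)=Ax(t)+b+u(t)$ with measurable inputs $u(t)\in U$, and let $$\mathcal R^L_{X_0}(t)=\{x(t): x \text{ solves } \dot x=Ax+b+u \text{ on }[0,t],\ u(s)\in U\ \forall s,\ x(0)\in X_0\},\qquad \mathcal R^L_{X_0}([0,\tau])=\bigcup_{t\in[0,\tau]}\mathcal R^L_{X_0}(t).$$ Define $$\alpha_\tau=(e^{\tau\|A\|}-1-\tau\|A\|)\max_{x\in X_0}\|x\|\,\mathbf 1,\quad \beta_\tau=(e^{\tau\|A\|}-1-\tau\|A\|)\|A\|^{-1}\max_{u\in U}\|u\|\,\mathbf 1,\quad \gamma_\tau=(e^{\tau\|A\|}-1-\tau\|A\|)\|A\|^{-1}\|b\|\,\mathbf 1,$$ $G(A,\tau)=\int_0^\tau e^{A(\tau-t)}\,dt$, and $$Y(\tau)=e^{A\tau}X_0\oplus\{G(A,\tau)b\}\oplus\tau U\oplus\mathcal B_{\beta_\tau},\qquad Y([0,\tau])=\mathrm{CH}\big(X_0,\;Y(\tau)\oplus\mathcal B_{\alpha_\tau+\gamma_\tau}\big).$$ Then $\mathcal R^L_{X_0}(\tau)\subseteq Y(\tau)$ and $\mathcal R^L_{X_0}([0,\tau])\subseteq Y([0,\tau])$.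
   Context: $\|\cdot\|$ denotes the infinity norm on $\mathbb R^n$ and the induced matrix norm; $\mathbf 1\in\mathbb R^n$ is the all-ones vector. For $\delta\in\mathbb R^n_{\ge0}$, $\mathcal B_\delta=\{x\in\mathbb R^n: |x_i|\le\delta_i\ \forall i\}$. $\oplus$ is Minkowski sum, $\tau U=\{\tau u:u\in U\}$, $e^{A\tau}X_0=\{e^{A\tau}x:x\in X_0\}$. For convex sets $\mathcal X,\mathcal Y$, $\mathrm{CH}(\mathcal X,\mathcal Y)=\{\lambda x+(1-\lambda)y: x\in\mathcal X,y\in\mathcal Y,\lambda\in[0,1]\}$. *)

theory Defs
  imports "HOL-Analysis.Analysis"
begin

primrec mat_pow :: "real^'n^'n \<Rightarrow> nat \<Rightarrow> real^'n^'n" where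
  "mat_pow A 0 = mat 1"
| "mat_pow A (Suc k) = A ** mat_pow A k"

definition mat_exp :: "real^'n^'n \<Rightarrow> real \<Rightarrow> real^'n^'n" where
  "mat_exp A t = (\<Sum>k. (t ^ k / fact k) *\<^sub>R mat_pow A k)"

definition mat_infnorm :: "real^'n^'n \<Rightarrow> real" where
  "mat_infnorm A = Sup {infnorm (A *v x) | x. infnorm x \<le> 1}"

definition ones :: "real^'n" where "ones = (\<chi> i. 1)"

definition box_set :: "real^'n \<Rightarrow> (real^'n) set" where
  "box_set \<delta> = {x. \<forall>i. \<bar>x $ i\<bar> \<le> \<delta> $ i}"

definition CH :: "(real^'n) set \<Rightarrow> (real^'n) set \<Rightarrow> (real^'n) set" where
  "CH X Y = {l *\<^sub>R x + (1 - l) *\<^sub>R y | l x y. x \<in> X \<and> y \<in> Y \<and> 0 \<le> l \<and> l \<le> 1}"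

definition is_solution ::
  "real^'n^'n \<Rightarrow> real^'n \<Rightarrow> (real^'n) set \<Rightarrow> (real^'n) set \<Rightarrow> real
     \<Rightarrow> (real \<Rightarrow> real^'n) \<Rightarrow> (real \<Rightarrow> real^'n) \<Rightarrow> bool" where
  "is_solution A b U X0 t x u \<longleftrightarrow>
     u measurable_on {0..t} \<and> (\<forall>s\<in>{0..t}. u s \<in> U) \<and> x 0 \<in> X0 \<and>
     (\<forall>s\<in>{0..t}. ((\<lambda>r. A *v x r + b + u r) has_integral (x s - x 0)) {0..s})"

definition reach :: "real^'n^'n \<Rightarrow> real^'n \<Rightarrow> (real^'n) set \<Rightarrow> (real^'n) set \<Rightarrow> real
     \<Rightarrow> (real^'n) set" where
  "reach A b U X0 t = {x t | x u. is_solution A b U X0 t x u}"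

definition reach_interval :: "real^'n^'n \<Rightarrow> real^'n \<Rightarrow> (real^'n) set \<Rightarrow> (real^'n) set \<Rightarrow> real
     \<Rightarrow> (real^'n) set" where
  "reach_interval A b U X0 \<tau> = (\<Union>t\<in>{0..\<tau>}. reach A b U X0 t)"

end

theory Submission
  imports Defs
begin

lemma ps_summable:
  fixes a :: "nat \<Rightarrow> 'a::euclidean_space"
  assumes "\<And>k. norm (a k) \<le> C * R^k" "C \<ge> 0" "R \<ge> 0"
  shows "summable (\<lambda>k. (s^k / fact k) *\<^sub>R a k)"
proof (rule summable_comparison_test)
  show "summable (\<lambda>k. C * ((\<bar>s\<bar> * R)^k / fact k))"
    using summable_exp_generic[of "\<bar>s\<bar> * R"] by (intro summable_mult) (simp add: divide_inverse mult.commute)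
  show "\<exists>N. \<forall>n\<ge>N. norm ((s ^ n / fact n) *\<^sub>R a n) \<le> C * ((\<bar>s\<bar> * R) ^ n / fact n)"
  proof (intro exI allI impI)
    fix n :: nat
    have "norm ((s ^ n / fact n) *\<^sub>R a n) = \<bar>s\<bar>^n / fact n * norm (a n)"
      by (simp add: power_abs)
    also have "\<dots> \<le> \<bar>s\<bar>^n / fact n * (C * R^n)"
      using assms by (intro mult_left_mono) auto
    also have "\<dots> = C * ((\<bar>s\<bar> * R) ^ n / fact n)" by (simp add: power_mult_distrib)
    finally show "norm ((s ^ n / fact n) *\<^sub>R a n) \<le> C * ((\<bar>s\<bar> * R) ^ n / fact n)" .
  qed
qed

lemma ps_deriv:
  fixes a :: "nat \<Rightarrow> 'a::euclidean_space"
  assumes a: "\<And>k. norm (a k) \<le> C * R^k" and C: "C \<ge> 0" and R: "R \<ge> 0"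
  shows "((\<lambda>s. \<Sum>k. (s^k / fact k) *\<^sub>R a k) has_vector_derivative
           (\<Sum>k. (x^k / fact k) *\<^sub>R a (Suc k))) (at x)"
  unfolding has_vector_derivative_def
proof (subst has_derivative_componentwise_within, intro ballI)
  fix i :: 'a assume i: "i \<in> Basis"
  define c where "c k = (a k \<bullet> i) / fact k" for k
  have inner_sum: "(\<Sum>k. (s^k / fact k) *\<^sub>R a k) \<bullet> i = (\<Sum>k. c k * s^k)" for s
  proof -
    have "(\<Sum>k. (s^k / fact k) *\<^sub>R a k) \<bullet> i = (\<Sum>k. ((s^k / fact k) *\<^sub>R a k) \<bullet> i)"
      using bounded_linear.suminf[OF bounded_linear_inner_left ps_summable[OF a C R]] by simp
    then show ?thesis by (simp add: c_def mult.commute)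
  qed
  have a1: "norm (a (Suc k)) \<le> (C * R) * R^k" for k using a[of "Suc k"] by (simp add: mult.assoc)
  have inner_sum2: "(\<Sum>k. (x^k / fact k) *\<^sub>R a (Suc k)) \<bullet> i = (\<Sum>k. diffs c k * x^k)"
  proof -
    have "(\<Sum>k. (x^k / fact k) *\<^sub>R a (Suc k)) \<bullet> i = (\<Sum>k. ((x^k / fact k) *\<^sub>R a (Suc k)) \<bullet> i)"
      using bounded_linear.suminf[OF bounded_linear_inner_left ps_summable[OF a1 _ R]] C R by simp
    also have "\<dots> = (\<Sum>k. diffs c k * x^k)"
    proof (rule suminf_cong)
      fix k :: nat
      have f: "fact (Suc k) = real (Suc k) * (fact k :: real)" by simp
      have "(fact k :: real) > 0" by simp
      then show "(x ^ k / fact k) *\<^sub>R a (Suc k) \<bullet> i = diffs c k * x ^ k"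
        unfolding c_def diffs_def f by (simp add: field_simps del: of_nat_Suc)
    qed
    finally show ?thesis .
  qed
  have summ: "summable (\<lambda>n. c n * y ^ n)" for y
  proof -
    have "summable (\<lambda>k. ((y^k / fact k) *\<^sub>R a k) \<bullet> i)"
      using bounded_linear.summable[OF bounded_linear_inner_left ps_summable[OF a C R]] by simp
    then show ?thesis by (simp add: c_def field_simps)
  qed
  have D: "((\<lambda>x. \<Sum>n. c n * x ^ n) has_field_derivative (\<Sum>n. diffs c n * x ^ n)) (at x)"
    by (rule termdiffs_strong_converges_everywhere[OF summ])
  show "((\<lambda>s. (\<Sum>k. (s ^ k / fact k) *\<^sub>R a k) \<bullet> i) has_derivative
         (\<lambda>h. (h *\<^sub>R (\<Sum>k. (x ^ k / fact k) *\<^sub>R a (Suc k))) \<bullet> i)) (at x within UNIV)"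
  proof -
    have e: "(\<lambda>h. (h *\<^sub>R (\<Sum>k. (x ^ k / fact k) *\<^sub>R a (Suc k))) \<bullet> i) = (*) (\<Sum>n. diffs c n * x ^ n)"
      using inner_sum2 by (auto simp: mult.commute)
    show ?thesis unfolding inner_sum e using D[unfolded has_field_derivative_def] by simp
  qed
qed

lemma mat_infnorm_bdd:
  fixes A :: "real^'n^'n"
  shows "bdd_above {infnorm (A *v x) | x. infnorm x \<le> 1}"
proof -
  obtain K where K: "K > 0" "\<And>x. norm (A *v x) \<le> norm x * K"
    using bounded_linear.pos_bounded[OF matrix_vector_mul_bounded_linear[of A]] by blast
  have "infnorm (A *v x) \<le> sqrt (real DIM(real^'n)) * K" if "infnorm x \<le> 1" for x :: "real^'n"
  proof -
    have "infnorm (A *v x) \<le> norm x * K" using infnorm_le_norm K(2) order_trans by blast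
    also have "\<dots> \<le> (sqrt (real DIM(real^'n)) * infnorm x) * K"
      using norm_le_infnorm[of x] K(1) by (intro mult_right_mono) auto
    also have "\<dots> \<le> sqrt (real DIM(real^'n)) * K"
      using that K(1) by (simp add: mult_left_le)
    finally show ?thesis .
  qed
  then show ?thesis unfolding bdd_above_def by blast
qed

lemma mat_infnorm_bound:
  fixes A :: "real^'n^'n"
  shows "infnorm (A *v v) \<le> mat_infnorm A * infnorm v"
proof (cases "v = 0")
  case True then show ?thesis by (simp add: infnorm_0)
next
  case False
  then have pos: "infnorm v > 0" by (simp add: infnorm_pos_lt)
  define w where "w = (1 / infnorm v) *\<^sub>R v"
  have "infnorm w = 1" using pos by (simp add: w_def infnorm_mul)
  then have "infnorm (A *v w) \<le> mat_infnorm A"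
    unfolding mat_infnorm_def by (intro cSup_upper mat_infnorm_bdd) auto
  moreover have "infnorm (A *v w) = infnorm (A *v v) / infnorm v"
  proof -
    have "A *v w = (1 / infnorm v) *\<^sub>R (A *v v)"
      by (simp add: w_def matrix_scaleR_vector_ac scaleR_matrix_vector_assoc)
    then show ?thesis using pos by (simp add: infnorm_mul)
  qed
  ultimately show ?thesis using pos by (simp add: divide_le_eq mult.commute)
qed

lemma mat_infnorm_nonneg:
  fixes A :: "real^'n^'n"
  shows "0 \<le> mat_infnorm A"
proof -
  have "infnorm (A *v 0) \<le> mat_infnorm A"
    unfolding mat_infnorm_def by (intro cSup_upper mat_infnorm_bdd) (auto simp: infnorm_0 intro!: exI[of _ 0])
  then show ?thesis using infnorm_pos_le[of "A *v 0"] by linarith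
qed

lemma mat_infnorm_pos:
  fixes A :: "real^'n^'n"
  assumes "A \<noteq> 0"
  shows "mat_infnorm A > 0"
proof -
  obtain x where x: "A *v x \<noteq> 0"
    using assms matrix_eq[of A 0] by auto
  have "0 < infnorm (A *v x)" using x by (simp add: infnorm_pos_lt)
  also have "\<dots> \<le> mat_infnorm A * infnorm x" by (rule mat_infnorm_bound)
  finally show ?thesis using infnorm_pos_le[of x] by (simp add: zero_less_mult_iff)
qed

lemma mat_pow_bound:
  fixes A :: "real^'n^'n"
  shows "infnorm (mat_pow A k *v v) \<le> mat_infnorm A ^ k * infnorm v"
proof (induction k)
  case 0 then show ?case by simp
next
  case (Suc k)
  have "infnorm (mat_pow A (Suc k) *v v) = infnorm (A *v (mat_pow A k *v v))"
    by (simp add: matrix_vector_mul_assoc)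
  also have "\<dots> \<le> mat_infnorm A * infnorm (mat_pow A k *v v)" by (rule mat_infnorm_bound)
  also have "\<dots> \<le> mat_infnorm A * (mat_infnorm A ^ k * infnorm v)"
    using Suc mat_infnorm_nonneg by (intro mult_left_mono) auto
  finally show ?case by (simp add: mult.assoc)
qed

lemma mat_norm_bound:
  fixes M :: "real^'n^'n"
  assumes "\<And>v. infnorm (M *v v) \<le> c * infnorm v" "c \<ge> 0"
  shows "norm M \<le> sqrt (real DIM(real^'n^'n)) * c"
proof -
  have "\<bar>M \<bullet> b\<bar> \<le> c" if "b \<in> Basis" for b
  proof -
    from that obtain i j where b: "b = axis i (axis j (1::real))" by (auto simp: Basis_vec_def)
    have "M \<bullet> b = M $ i $ j"
      by (simp add: b inner_axis)
    also have "\<dots> = (M *v axis j 1) $ i"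
      by (simp add: matrix_vector_mult_def axis_def if_distrib cong: if_cong)
    finally have "M \<bullet> b = (M *v axis j 1) $ i" .
    then have "\<bar>M \<bullet> b\<bar> \<le> infnorm (M *v axis j 1)" using component_le_infnorm_cart by metis
    also have "\<dots> \<le> c * infnorm (axis j (1::real))" by (rule assms(1))
    also have "\<dots> \<le> c * 1"
      using infnorm_le_norm[of "axis j (1::real)"] assms(2) by (intro mult_left_mono) (auto simp: norm_axis_1)
    finally show ?thesis by simp
  qed
  then have "infnorm M \<le> c" by (simp add: infnorm_Max)
  then show ?thesis using norm_le_infnorm[of M] by (smt (verit) mult_left_mono real_sqrt_ge_zero of_nat_0_le_iff)
qed

lemma bounded_linear_mv: "bounded_linear (\<lambda>M::real^'n^'n. M *v v)"
proof (rule linear_conv_bounded_linear[THEN iffD1], rule linearI)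
  show "(x + y) *v v = x *v v + y *v v" for x y :: "real^'n^'n" by (simp add: matrix_vector_mult_add_rdistrib)
  show "(c *\<^sub>R x) *v v = c *\<^sub>R (x *v v)" for c and x :: "real^'n^'n" by (simp add: scaleR_matrix_vector_assoc)
qed

lemma mat_pow_norm:
  fixes A :: "real^'n^'n"
  shows "norm (mat_pow A k) \<le> sqrt (real DIM(real^'n^'n)) * mat_infnorm A ^ k"
  by (rule mat_norm_bound) (auto simp: mat_pow_bound mat_infnorm_nonneg)

lemma mat_pow_vec_norm:
  fixes A :: "real^'n^'n"
  shows "norm (mat_pow A k *v v) \<le> (sqrt (real DIM(real^'n)) * infnorm v) * mat_infnorm A ^ k"
proof -
  have "norm (mat_pow A k *v v) \<le> sqrt (real DIM(real^'n)) * infnorm (mat_pow A k *v v)"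
    by (rule norm_le_infnorm)
  also have "\<dots> \<le> sqrt (real DIM(real^'n)) * (mat_infnorm A ^ k * infnorm v)"
    by (intro mult_left_mono mat_pow_bound) auto
  finally show ?thesis by (simp add: mult_ac)
qed

lemma mat_exp_summable:
  fixes A :: "real^'n^'n"
  shows "summable (\<lambda>k. (s^k / fact k) *\<^sub>R mat_pow A k)"
  by (rule ps_summable[OF mat_pow_norm]) (auto simp: mat_infnorm_nonneg)

lemma mat_exp_vec_summable:
  fixes A :: "real^'n^'n"
  shows "summable (\<lambda>k. (s^k / fact k) *\<^sub>R (mat_pow A k *v v))"
  by (rule ps_summable[OF mat_pow_vec_norm]) (auto simp: mat_infnorm_nonneg infnorm_pos_le)

lemma mat_exp_apply:
  fixes A :: "real^'n^'n"
  shows "mat_exp A s *v v = (\<Sum>k. (s^k / fact k) *\<^sub>R (mat_pow A k *v v))"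
  unfolding mat_exp_def
  using bounded_linear.suminf[OF bounded_linear_mv[of v] mat_exp_summable[of s A]]
  by (simp add: scaleR_matrix_vector_assoc)

lemma mat_exp_zero: "mat_exp A 0 *v v = v"
proof -
  have "(\<lambda>k. ((0::real)^k / fact k) *\<^sub>R (mat_pow A k *v v)) = (\<lambda>k. if k = 0 then v else 0)"
    by (auto simp: fun_eq_iff)
  then show ?thesis unfolding mat_exp_apply using sums_single[of 0 "\<lambda>_. v"] by (simp add: sums_iff)
qed

lemma mat_exp_deriv:
  fixes A :: "real^'n^'n"
  shows "((\<lambda>s. mat_exp A s *v v) has_vector_derivative (A *v (mat_exp A s *v v))) (at s)"
proof -
  have "((\<lambda>s. \<Sum>k. (s^k / fact k) *\<^sub>R (mat_pow A k *v v)) has_vector_derivative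
         (\<Sum>k. (s^k / fact k) *\<^sub>R (mat_pow A (Suc k) *v v))) (at s)"
    by (rule ps_deriv[OF mat_pow_vec_norm]) (auto simp: mat_infnorm_nonneg infnorm_pos_le)
  moreover have "(\<Sum>k. (s^k / fact k) *\<^sub>R (mat_pow A (Suc k) *v v)) = A *v (mat_exp A s *v v)"
  proof -
    have t: "(s^k / fact k) *\<^sub>R (mat_pow A (Suc k) *v v) = A *v ((s^k / fact k) *\<^sub>R (mat_pow A k *v v))" for k
      by (simp only: mat_pow.simps matrix_vector_mul_assoc[symmetric] linear_cmul[OF matrix_vector_mul_linear])
    show ?thesis
      unfolding mat_exp_apply t
      using bounded_linear.suminf[OF matrix_vector_mul_bounded_linear[of A] mat_exp_vec_summable[of s A v]]
      by simp
  qed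
  ultimately show ?thesis unfolding mat_exp_apply by simp
qed

lemma mat_exp_cont:
  fixes A :: "real^'n^'n"
  shows "continuous_on S (mat_exp A)"
proof -
  have "(mat_exp A has_vector_derivative (\<Sum>k. (s^k / fact k) *\<^sub>R mat_pow A (Suc k))) (at s)" for s
    unfolding mat_exp_def[abs_def]
    by (rule ps_deriv[OF mat_pow_norm]) (auto simp: mat_infnorm_nonneg)
  then show ?thesis
    by (meson continuous_at_imp_continuous_on has_vector_derivative_continuous)
qed

definition pterm :: "real^'n^'n \<Rightarrow> real^'n \<Rightarrow> nat \<Rightarrow> real^'n" where
  "pterm A b k = (case k of 0 \<Rightarrow> 0 | Suc j \<Rightarrow> mat_pow A j *v b)"

definition psum :: "real^'n^'n \<Rightarrow> real^'n \<Rightarrow> real \<Rightarrow> real^'n" where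
  "psum A b s = (\<Sum>k. (s^k / fact k) *\<^sub>R pterm A b k)"

lemma pterm_norm:
  fixes A :: "real^'n^'n"
  assumes L: "mat_infnorm A > 0"
  shows "norm (pterm A b k) \<le> (sqrt (real DIM(real^'n)) * infnorm b / mat_infnorm A) * mat_infnorm A ^ k"
proof (cases k)
  case 0 then show ?thesis using L by (simp add: pterm_def infnorm_pos_le)
next
  case (Suc j)
  have "norm (pterm A b k) \<le> (sqrt (real DIM(real^'n)) * infnorm b) * mat_infnorm A ^ j"
    using Suc mat_pow_vec_norm by (simp add: pterm_def)
  also have "\<dots> = (sqrt (real DIM(real^'n)) * infnorm b / mat_infnorm A) * mat_infnorm A ^ k"
    using L Suc by simp
  finally show ?thesis .
qed

lemma psum_summable:
  fixes A :: "real^'n^'n"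
  assumes L: "mat_infnorm A > 0"
  shows "summable (\<lambda>k. (s^k / fact k) *\<^sub>R pterm A b k)"
  by (rule ps_summable[OF pterm_norm[OF L]]) (use L in \<open>auto simp: infnorm_pos_le\<close>)

lemma psum_deriv:
  fixes A :: "real^'n^'n"
  assumes L: "mat_infnorm A > 0"
  shows "(psum A b has_vector_derivative (mat_exp A s *v b)) (at s)"
proof -
  have "(psum A b has_vector_derivative (\<Sum>k. (s^k / fact k) *\<^sub>R pterm A b (Suc k))) (at s)"
    unfolding psum_def[abs_def]
    by (rule ps_deriv[OF pterm_norm[OF L]]) (use L in \<open>auto simp: infnorm_pos_le\<close>)
  then show ?thesis by (simp add: pterm_def mat_exp_apply)
qed

lemma psum_zero: "psum A b 0 = 0"
proof -
  have "(\<lambda>k. ((0::real)^k / fact k) *\<^sub>R pterm A b k) = (\<lambda>k. 0)"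
    by (auto simp: fun_eq_iff pterm_def split: nat.split)
  then show ?thesis by (simp add: psum_def)
qed

lemma psum_eq:
  fixes A :: "real^'n^'n"
  assumes L: "mat_infnorm A > 0"
  shows "A *v psum A b s + b = mat_exp A s *v b"
proof -
  define T where "T k = (s^k / fact k) *\<^sub>R (A *v pterm A b k)" for k
  define E where "E k = (s^k / fact k) *\<^sub>R (mat_pow A k *v b)" for k
  have 1: "T sums (A *v psum A b s)"
  proof -
    have "(\<lambda>k. A *v ((s^k / fact k) *\<^sub>R pterm A b k)) sums (A *v psum A b s)"
      unfolding psum_def
      by (rule bounded_linear.sums[OF matrix_vector_mul_bounded_linear summable_sums[OF psum_summable[OF L]]])
    then show ?thesis unfolding T_def by (simp only: linear_cmul[OF matrix_vector_mul_linear])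
  qed
  have 2: "E sums (mat_exp A s *v b)"
    unfolding E_def mat_exp_apply by (rule summable_sums[OF mat_exp_vec_summable])
  have TE: "T (Suc k) = E (Suc k)" for k
    by (simp add: T_def E_def pterm_def matrix_vector_mul_assoc)
  have "(\<lambda>k. E (Suc k)) sums (mat_exp A s *v b - E 0)"
    using 2 sums_Suc_iff[of E "mat_exp A s *v b - E 0"] by simp
  then have "(\<lambda>k. T (Suc k)) sums (mat_exp A s *v b - b)" by (simp add: TE E_def)
  then have "T sums (mat_exp A s *v b - b)"
    using sums_Suc_iff[of T "mat_exp A s *v b - b"] by (simp add: T_def pterm_def)
  with 1 have "A *v psum A b s = mat_exp A s *v b - b" using sums_unique2 by blast
  then show ?thesis by simp
qed

lemma G_eq:
  fixes A :: "real^'n^'n"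
  assumes L: "mat_infnorm A > 0" and tau: "\<tau> \<ge> 0"
  shows "integral {0..\<tau>} (\<lambda>t. mat_exp A (\<tau> - t)) *v b = psum A b \<tau>"
proof -
  have cont: "continuous_on {0..\<tau>} (\<lambda>t. mat_exp A (\<tau> - t))"
    by (rule continuous_on_compose2[OF mat_exp_cont[of UNIV A]]) (auto intro!: continuous_intros)
  then have int: "(\<lambda>t. mat_exp A (\<tau> - t)) integrable_on {0..\<tau>}"
    by (rule integrable_continuous_real)
  have "integral {0..\<tau>} (\<lambda>t. mat_exp A (\<tau> - t)) *v b = integral {0..\<tau>} (\<lambda>t. mat_exp A (\<tau> - t) *v b)"
    using integral_linear[OF int bounded_linear_mv[of b]] by (simp add: o_def)
  also have "\<dots> = psum A b \<tau>"
  proof (rule integral_unique)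
    have d: "((\<lambda>t. - psum A b (\<tau> - t)) has_vector_derivative (mat_exp A (\<tau> - t) *v b)) (at t within {0..\<tau>})" for t
    proof -
      have "((\<lambda>t. \<tau> - t) has_vector_derivative (-1)) (at t)"
        by (auto intro!: derivative_eq_intros simp: has_real_derivative_iff_has_vector_derivative[symmetric])
      from vector_diff_chain_at[OF this psum_deriv[OF L]]
      have "((\<lambda>t. psum A b (\<tau> - t)) has_vector_derivative (-1) *\<^sub>R (mat_exp A (\<tau> - t) *v b)) (at t)"
        by (simp add: o_def)
      then have "((\<lambda>t. - psum A b (\<tau> - t)) has_vector_derivative (mat_exp A (\<tau> - t) *v b)) (at t)"
        using has_vector_derivative_minus by fastforce
      then show ?thesis by (rule has_vector_derivative_at_within)
    qed
    show "((\<lambda>t. mat_exp A (\<tau> - t) *v b) has_integral psum A b \<tau>) {0..\<tau>}"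
      using fundamental_theorem_of_calculus[OF tau d] by (simp add: psum_zero)
  qed
  finally show ?thesis .
qed

lemma gronwall:
  fixes \<phi> :: "real \<Rightarrow> real"
  assumes L: "L > 0" and M: "M \<ge> 0" and t: "t \<ge> 0"
    and cont: "continuous_on {0..t} \<phi>"
    and ineq: "\<And>s. s \<in> {0..t} \<Longrightarrow> \<phi> s \<le> integral {0..s} (\<lambda>r. L * (\<phi> r + M * r))"
  shows "\<phi> t \<le> M / L * (exp (t * L) - 1 - t * L)"
proof -
  define \<psi> where "\<psi> s = M / L * (exp (s * L) - 1 - s * L)" for s
  have \<psi>_int: "integral {0..s} (\<lambda>r. L * (\<psi> r + M * r)) = \<psi> s" if "s \<ge> 0" for s
  proof (rule integral_unique)
    have "(\<psi> has_real_derivative L * (\<psi> r + M * r)) (at r within {0..s})" for r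
    proof -
      have "(\<psi> has_real_derivative M / L * (exp (r * L) * L - L)) (at r within {0..s})"
        unfolding \<psi>_def[abs_def] using L by (auto intro!: derivative_eq_intros)
      moreover have "M / L * (exp (r * L) * L - L) = L * (\<psi> r + M * r)"
        using L by (simp add: \<psi>_def field_simps)
      ultimately show ?thesis by simp
    qed
    then have "((\<lambda>r. L * (\<psi> r + M * r)) has_integral \<psi> s - \<psi> 0) {0..s}"
      using that by (intro fundamental_theorem_of_calculus) (auto simp: has_real_derivative_iff_has_vector_derivative[symmetric])
    then show "((\<lambda>r. L * (\<psi> r + M * r)) has_integral \<psi> s) {0..s}" by (simp add: \<psi>_def)
  qed
  define g where "g s = \<phi> s - \<psi> s" for s
  have gcont: "continuous_on {0..t} g"
    unfolding g_def \<psi>_def using cont L by (auto intro!: continuous_intros)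
  have gint: "g integrable_on {0..s}" if "s \<in> {0..t}" for s
    using gcont that by (intro integrable_continuous_real) (auto elim: continuous_on_subset)
  have gineq: "g s \<le> L * integral {0..s} g" if s: "s \<in> {0..t}" for s
  proof -
    have c1: "continuous_on {0..s} (\<lambda>r. L * (\<phi> r + M * r))"
      using cont s by (auto intro!: continuous_intros elim: continuous_on_subset)
    have c2: "continuous_on {0..s} (\<lambda>r. L * (\<psi> r + M * r))"
      unfolding \<psi>_def using L by (auto intro!: continuous_intros)
    have "integral {0..s} (\<lambda>r. L * (\<phi> r + M * r)) - integral {0..s} (\<lambda>r. L * (\<psi> r + M * r))
          = integral {0..s} (\<lambda>r. L * (\<phi> r + M * r) - L * (\<psi> r + M * r))"
      by (rule integral_diff[symmetric]) (auto intro!: integrable_continuous_real c1 c2)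
    also have "\<dots> = integral {0..s} (\<lambda>r. L * g r)"
      by (simp add: g_def algebra_simps)
    also have "\<dots> = L * integral {0..s} g" by simp
    finally show ?thesis using ineq[OF s] \<psi>_int[of s] s by (simp add: g_def)
  qed
  define \<Gamma> where "\<Gamma> s = integral {0..s} g" for s
  define K where "K s = exp (- L * s) * \<Gamma> s" for s
  have \<Gamma>cont: "continuous_on {0..t} \<Gamma>"
    unfolding \<Gamma>_def[abs_def] using gint[of t] t by (intro indefinite_integral_continuous_1) auto
  have Kcont: "continuous_on {0..t} K"
    unfolding K_def[abs_def] using \<Gamma>cont by (auto intro!: continuous_intros)
  have "K t \<le> K 0"
  proof (rule DERIV_nonpos_imp_decreasing_open[OF t _ Kcont])
    fix x assume x: "0 < x" "x < t"
    have d\<Gamma>: "(\<Gamma> has_real_derivative g x) (at x)"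
      using integral_has_real_derivative[OF gcont, of x] x at_within_Icc_at[of 0 x t]
      unfolding \<Gamma>_def[abs_def] by auto
    have "(K has_real_derivative exp (- L * x) * (- L) * \<Gamma> x + exp (- L * x) * g x) (at x)"
      unfolding K_def[abs_def] by (auto intro!: derivative_eq_intros d\<Gamma>)
    moreover have "exp (- L * x) * (- L) * \<Gamma> x + exp (- L * x) * g x \<le> 0"
    proof -
      have "g x - L * \<Gamma> x \<le> 0" using gineq[of x] x by (simp add: \<Gamma>_def)
      then have "exp (- L * x) * (g x - L * \<Gamma> x) \<le> 0" by (simp add: mult_nonneg_nonpos)
      then show ?thesis by (simp add: algebra_simps)
    qed
    ultimately show "\<exists>y. (K has_real_derivative y) (at x) \<and> y \<le> 0" by blast
  qed
  moreover have "K 0 = 0" by (simp add: K_def \<Gamma>_def)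
  ultimately have "exp (- L * t) * \<Gamma> t \<le> 0" by (simp add: K_def)
  then have "\<Gamma> t \<le> 0" by (simp add: mult_le_0_iff)
  then have "L * \<Gamma> t \<le> 0" using L by (simp add: mult_nonneg_nonpos)
  moreover have "g t \<le> L * \<Gamma> t" using gineq[of t] t by (simp add: \<Gamma>_def)
  ultimately have "g t \<le> 0" by linarith
  then show ?thesis by (simp add: g_def \<psi>_def)
qed

lemma integral_in_convex:
  fixes u :: "real \<Rightarrow> real^'n"
  assumes U: "convex U" "closed U" and t: "t > 0" and int: "u integrable_on {0..t}"
    and uU: "\<And>s. s \<in> {0..t} \<Longrightarrow> u s \<in> U"
  shows "(1 / t) *\<^sub>R integral {0..t} u \<in> U"
proof (rule ccontr)
  assume "(1 / t) *\<^sub>R integral {0..t} u \<notin> U"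
  then obtain a c where ac: "a \<bullet> ((1 / t) *\<^sub>R integral {0..t} u) < c" "\<And>x. x \<in> U \<Longrightarrow> c < a \<bullet> x"
    using separating_hyperplane_closed_point[OF U] by blast
  have int2: "(\<lambda>s. u s \<bullet> a) integrable_on {0..t}"
    using integrable_linear[OF int bounded_linear_inner_left[of a]] by (simp add: o_def)
  have "integral {0..t} (\<lambda>s. c) \<le> integral {0..t} (\<lambda>s. u s \<bullet> a)"
    using ac(2)[OF uU] by (intro integral_le int2) (auto simp: inner_commute less_imp_le)
  also have "\<dots> = integral {0..t} u \<bullet> a" by (rule integral_component_eq[OF int])
  finally have "c * t \<le> a \<bullet> integral {0..t} u" using t by (simp add: inner_commute mult.commute)
  then have "c \<le> a \<bullet> ((1 / t) *\<^sub>R integral {0..t} u)" using t by (simp add: field_simps)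
  with ac(1) show False by simp
qed

lemma infnorm_le_cart:
  fixes x :: "real^'n"
  assumes "\<And>i. \<bar>x $ i\<bar> \<le> c"
  shows "infnorm x \<le> c"
proof -
  have "\<bar>x \<bullet> b\<bar> \<le> c" if "b \<in> Basis" for b
  proof -
    from that obtain i where "b = axis i (1::real)" by (auto simp: Basis_vec_def)
    then show ?thesis using assms[of i] by (simp add: inner_axis)
  qed
  then show ?thesis by (simp add: infnorm_Max)
qed

lemma infnorm_integral_bound:
  fixes g :: "real \<Rightarrow> real^'n"
  assumes "g integrable_on S" "k integrable_on S" "\<And>x. x \<in> S \<Longrightarrow> infnorm (g x) \<le> k x"
  shows "infnorm (integral S g) \<le> integral S k"
proof (rule infnorm_le_cart)
  fix i
  have gi: "(\<lambda>x. g x $ i) integrable_on S" using assms(1) integrable_on_iff_component by blast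
  have "\<bar>integral S g $ i\<bar> = norm (integral S (\<lambda>x. g x $ i))"
    using integral_component_eq_cart[OF assms(1)] by simp
  also have "\<dots> \<le> integral S k"
    using gi assms(2) by (rule integral_norm_bound_integral)
       (use assms(3) component_le_infnorm_cart order_trans in \<open>fastforce\<close>)
  finally show "\<bar>integral S g $ i\<bar> \<le> integral S k" .
qed

lemma core:
  fixes A :: "real^'n^'n" and b :: "real^'n"
  assumes L: "mat_infnorm A > 0" and M: "M \<ge> 0" and Mb: "\<And>y. y \<in> U \<Longrightarrow> infnorm y \<le> M"
    and U: "convex U" "closed U" and t: "t \<ge> 0"
    and sol: "is_solution A b U X0 t x u"
  shows "\<exists>u'\<in>U. \<exists>e. x t = mat_exp A t *v x 0 + psum A b t + t *\<^sub>R u' + e \<and>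
           infnorm e \<le> M / mat_infnorm A * (exp (t * mat_infnorm A) - 1 - t * mat_infnorm A)"
proof -
  define L' where "L' = mat_infnorm A"
  have umeas: "u measurable_on {0..t}" and uU: "\<And>s. s \<in> {0..t} \<Longrightarrow> u s \<in> U"
    and hint: "\<And>s. s \<in> {0..t} \<Longrightarrow> ((\<lambda>r. A *v x r + b + u r) has_integral (x s - x 0)) {0..s}"
    using sol unfolding is_solution_def by auto
  define f where "f r = A *v x r + b + u r" for r
  have uint: "u integrable_on {0..t}"
  proof (rule measurable_bounded_by_integrable_imp_integrable)
    show "u \<in> borel_measurable (lebesgue_on {0..t})"
      using umeas by (rule measurable_on_imp_borel_measurable_lebesgue) simp
    show "(\<lambda>_. sqrt (real DIM(real^'n)) * M) integrable_on {0..t}" by (rule integrable_on_const) simp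
    show "norm (u s) \<le> sqrt (real DIM(real^'n)) * M" if "s \<in> {0..t}" for s
      using norm_le_infnorm[of "u s"] Mb[OF uU[OF that]]
      by (smt (verit) mult_left_mono real_sqrt_ge_zero of_nat_0_le_iff)
  qed simp
  have uint_s: "u integrable_on {0..s}" if "s \<in> {0..t}" for s
    by (rule integrable_on_subinterval[OF uint]) (use that in auto)
  define UI where "UI s = integral {0..s} u" for s
  have UIbound: "infnorm (UI s) \<le> M * s" if s: "s \<in> {0..t}" for s
  proof (cases "s = 0")
    case True then show ?thesis by (simp add: UI_def infnorm_0)
  next
    case False
    then have sp: "s > 0" using s by auto
    have "(1 / s) *\<^sub>R UI s \<in> U"
      unfolding UI_def by (rule integral_in_convex[OF U sp uint_s[OF s]]) (use s uU in auto)
    then have "infnorm ((1 / s) *\<^sub>R UI s) \<le> M" by (rule Mb)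
    then show ?thesis using sp by (simp add: infnorm_mul field_simps)
  qed
  have UIcont: "continuous_on {0..t} UI"
    unfolding UI_def[abs_def] by (rule indefinite_integral_continuous_1[OF uint])
  have "(f has_integral (x t - x 0)) {0..t}" unfolding f_def using hint[of t] t by simp
  then have fint: "f integrable_on {0..t}" by (rule has_integral_integrable)
  have xeq: "x s = x 0 + integral {0..s} f" if "s \<in> {0..t}" for s
    using hint[OF that] unfolding f_def[abs_def] by (simp add: integral_unique)
  have xcont: "continuous_on {0..t} x"
  proof -
    have "continuous_on {0..t} (\<lambda>s. x 0 + integral {0..s} f)"
      by (intro continuous_intros indefinite_integral_continuous_1[OF fint])
    then show ?thesis by (rule continuous_on_eq) (rule xeq[symmetric])
  qed
  define h where "h s = mat_exp A s *v x 0 + psum A b s" for s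
  have hderiv: "(h has_vector_derivative (A *v h s + b)) (at s)" for s
  proof -
    have "(h has_vector_derivative (A *v (mat_exp A s *v x 0) + mat_exp A s *v b)) (at s)"
      unfolding h_def[abs_def] by (intro derivative_intros mat_exp_deriv psum_deriv[OF L])
    moreover have "A *v (mat_exp A s *v x 0) + mat_exp A s *v b = A *v h s + b"
      using psum_eq[OF L, of b s] by (simp add: h_def matrix_vector_right_distrib algebra_simps)
    ultimately show ?thesis by simp
  qed
  have hcont: "continuous_on S h" for S
    by (meson continuous_at_imp_continuous_on has_vector_derivative_continuous hderiv)
  have h0: "h 0 = x 0" by (simp add: h_def mat_exp_zero psum_zero)
  define e where "e s = x s - h s - UI s" for s
  have econt: "continuous_on {0..t} e"
    unfolding e_def[abs_def] using xcont hcont UIcont by (intro continuous_intros)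
  have xhcont: "continuous_on {0..t} (\<lambda>r. x r - h r)" using xcont hcont by (intro continuous_intros)
  have ekey: "e s = integral {0..s} (\<lambda>r. A *v (x r - h r))" if s: "s \<in> {0..t}" for s
  proof -
    have sub: "{0..s} \<subseteq> {0..t}" using s by auto
    have fint_s: "f integrable_on {0..s}" by (rule integrable_on_subinterval[OF fint sub])
    have Axint: "(\<lambda>r. A *v x r) integrable_on {0..s}"
    proof -
      have "(\<lambda>r. f r - b - u r) integrable_on {0..s}"
        by (intro integrable_diff fint_s uint_s[OF s] integrable_on_const) simp
      then show ?thesis by (simp add: f_def)
    qed
    have Ahcont: "continuous_on {0..s} (\<lambda>r. A *v h r)"
      using hcont by (intro continuous_on_compose2[OF linear_continuous_on[OF matrix_vector_mul_bounded_linear]]) auto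
    have Ahint: "(\<lambda>r. A *v h r) integrable_on {0..s}" by (rule integrable_continuous_real[OF Ahcont])
    have E1: "integral {0..s} f = integral {0..s} (\<lambda>r. A *v x r) + integral {0..s} (\<lambda>r. b) + UI s"
    proof -
      have "integral {0..s} f = integral {0..s} (\<lambda>r. (A *v x r + b) + u r)" by (simp add: f_def[abs_def])
      also have "\<dots> = integral {0..s} (\<lambda>r. A *v x r + b) + integral {0..s} u"
        by (rule integral_add) (auto intro!: integrable_add Axint uint_s[OF s] integrable_on_const)
      also have "integral {0..s} (\<lambda>r. A *v x r + b) = integral {0..s} (\<lambda>r. A *v x r) + integral {0..s} (\<lambda>r. b)"
        by (rule integral_add) (auto intro!: Axint integrable_on_const)
      finally show ?thesis by (simp add: UI_def)
    qed
    have E2: "h s - h 0 = integral {0..s} (\<lambda>r. A *v h r) + integral {0..s} (\<lambda>r. b)"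
    proof -
      have "((\<lambda>r. A *v h r + b) has_integral h s - h 0) {0..s}"
        using s by (intro fundamental_theorem_of_calculus) (auto intro: has_vector_derivative_at_within hderiv)
      then have "h s - h 0 = integral {0..s} (\<lambda>r. A *v h r + b)" by (simp add: integral_unique)
      also have "\<dots> = integral {0..s} (\<lambda>r. A *v h r) + integral {0..s} (\<lambda>r. b)"
        by (rule integral_add) (auto intro!: Ahint integrable_on_const)
      finally show ?thesis .
    qed
    have E3: "integral {0..s} (\<lambda>r. A *v (x r - h r)) = integral {0..s} (\<lambda>r. A *v x r) - integral {0..s} (\<lambda>r. A *v h r)"
      using integral_diff[OF Axint Ahint] by (simp add: linear_diff[OF matrix_vector_mul_linear])
    have "e s = (x 0 + integral {0..s} f) - h s - UI s" using xeq[OF s] by (simp add: e_def)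
    also have "\<dots> = (x 0 + integral {0..s} (\<lambda>r. A *v x r) + integral {0..s} (\<lambda>r. b) + UI s)
        - (x 0 + integral {0..s} (\<lambda>r. A *v h r) + integral {0..s} (\<lambda>r. b)) - UI s"
      using E1 E2 h0 by (simp add: algebra_simps)
    also have "\<dots> = integral {0..s} (\<lambda>r. A *v x r) - integral {0..s} (\<lambda>r. A *v h r)"
      by (simp add: algebra_simps)
    finally show ?thesis using E3 by simp
  qed
  define \<phi> where "\<phi> s = infnorm (e s)" for s
  have \<phi>cont: "continuous_on {0..t} \<phi>" unfolding \<phi>_def[abs_def] by (intro continuous_on_infnorm econt)
  have \<phi>ineq: "\<phi> s \<le> integral {0..s} (\<lambda>r. L' * (\<phi> r + M * r))" if s: "s \<in> {0..t}" for s
  proof -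
    have sub: "{0..s} \<subseteq> {0..t}" using s by auto
    have c1: "continuous_on {0..s} (\<lambda>r. A *v (x r - h r))"
      using continuous_on_subset[OF xhcont sub] by (intro continuous_on_compose2[OF linear_continuous_on[OF matrix_vector_mul_bounded_linear]]) auto
    have c2: "continuous_on {0..s} (\<lambda>r. L' * (\<phi> r + M * r))"
      using continuous_on_subset[OF \<phi>cont sub] by (intro continuous_intros)
    have "\<phi> s = infnorm (integral {0..s} (\<lambda>r. A *v (x r - h r)))" by (simp add: \<phi>_def ekey[OF s])
    also have "\<dots> \<le> integral {0..s} (\<lambda>r. L' * (\<phi> r + M * r))"
    proof (rule infnorm_integral_bound[OF integrable_continuous_real[OF c1] integrable_continuous_real[OF c2]])
      fix r assume r: "r \<in> {0..s}"
      then have rt: "r \<in> {0..t}" using sub by auto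
      have "x r - h r = e r + UI r" by (simp add: e_def)
      then have "infnorm (A *v (x r - h r)) \<le> L' * infnorm (e r + UI r)"
        unfolding L'_def by (simp add: mat_infnorm_bound)
      also have "\<dots> \<le> L' * (\<phi> r + M * r)"
        using infnorm_triangle[of "e r" "UI r"] UIbound[OF rt] L
        by (intro mult_left_mono) (auto simp: \<phi>_def L'_def)
      finally show "infnorm (A *v (x r - h r)) \<le> L' * (\<phi> r + M * r)" .
    qed
    finally show ?thesis .
  qed
  have ebound: "infnorm (e t) \<le> M / L' * (exp (t * L') - 1 - t * L')"
    using gronwall[OF _ M t \<phi>cont \<phi>ineq] L by (simp add: \<phi>_def L'_def)
  obtain u' where u': "u' \<in> U" "UI t = t *\<^sub>R u'"
  proof (cases "t = 0")
    case True
    then show ?thesis using that[of "u 0"] uU[of 0] by (simp add: UI_def)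
  next
    case False
    then have tp: "t > 0" using t by auto
    have "(1 / t) *\<^sub>R UI t \<in> U"
      unfolding UI_def by (rule integral_in_convex[OF U tp uint]) (use uU in auto)
    then show ?thesis using that[of "(1 / t) *\<^sub>R UI t"] tp by simp
  qed
  have xt: "x t = mat_exp A t *v x 0 + psum A b t + t *\<^sub>R u' + e t"
    by (simp add: e_def h_def u'(2))
  show ?thesis
  proof (rule bexI[where x=u'])
    show "u' \<in> U" by (rule u'(1))
    show "\<exists>e. x t = mat_exp A t *v x 0 + psum A b t + t *\<^sub>R u' + e \<and>
           infnorm e \<le> M / mat_infnorm A * (exp (t * mat_infnorm A) - 1 - t * mat_infnorm A)"
      using xt ebound unfolding L'_def by (intro exI[of _ "e t"] conjI)
  qed
qed

lemma infnorm_suminf_bound: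
  fixes f :: "nat \<Rightarrow> real^'n"
  assumes f: "f sums S" and g: "summable g" and fg: "\<And>k. infnorm (f k) \<le> g k"
  shows "infnorm S \<le> suminf g"
proof -
  have gnn: "0 \<le> g k" for k using fg[of k] infnorm_pos_le[of "f k"] by linarith
  have lim: "(\<lambda>n. infnorm (\<Sum>k<n. f k)) \<longlonglongrightarrow> infnorm S"
    using f unfolding sums_def by (rule tendsto_infnorm)
  show ?thesis
  proof (rule LIMSEQ_le_const2[OF lim], intro exI allI impI)
    fix n :: nat
    have "infnorm (\<Sum>k<n. f k) \<le> (\<Sum>k<n. infnorm (f k))"
    proof (induction n)
      case 0 then show ?case by (simp add: infnorm_0)
    next
      case (Suc n)
      then show ?case using infnorm_triangle[of "\<Sum>k<n. f k" "f n"] by simp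
    qed
    also have "\<dots> \<le> (\<Sum>k<n. g k)" by (intro sum_mono fg)
    also have "\<dots> \<le> suminf g" by (rule sum_le_suminf[OF g]) (auto simp: gnn)
    finally show "infnorm (\<Sum>k<n. f k) \<le> suminf g" .
  qed
qed

lemma exp_tail_sums:
  fixes x :: real
  shows "(\<lambda>k. if k < 2 then 0 else x^k / fact k) sums (exp x - 1 - x)"
proof -
  have e: "(\<lambda>k. x^k / fact k) sums exp x" using exp_converges[of x] by (simp add: divide_inverse mult.commute)
  have "(\<lambda>k. x^k / fact k - (if k = 0 then 1 else 0) - (if k = 1 then x else 0)) sums (exp x - 1 - x)"
    by (intro sums_diff e sums_single)
  moreover have "(\<lambda>k. x^k / fact k - (if k = 0 then 1 else 0) - (if k = 1 then x else 0)) =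
                 (\<lambda>k. if k < 2 then 0 else x^k / fact k)"
  proof
    fix k :: nat show "x^k / fact k - (if k = 0 then 1 else 0) - (if k = 1 then x else 0) =
                 (if k < 2 then 0 else x^k / fact k)"
      by (cases "k = 0"; cases "k = 1") auto
  qed
  ultimately show ?thesis by simp
qed

lemma interp_bound:
  fixes P :: "nat \<Rightarrow> real^'n"
  assumes St: "(\<lambda>k. (t^k / fact k) *\<^sub>R P k) sums St"
    and S\<tau>: "(\<lambda>k. (\<tau>^k / fact k) *\<^sub>R P k) sums S\<tau>"
    and t: "0 \<le> t" "t \<le> \<tau>" and \<tau>: "\<tau> > 0" and L: "L \<ge> 0" and K: "K \<ge> 0"
    and PK: "\<And>k. k \<ge> 2 \<Longrightarrow> infnorm (P k) \<le> K * L^k"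
  shows "infnorm (St - (t / \<tau>) *\<^sub>R S\<tau> - (1 - t / \<tau>) *\<^sub>R P 0) \<le> (t / \<tau>) * K * (exp (\<tau> * L) - 1 - \<tau> * L)"
proof -
  define \<theta> where "\<theta> = t / \<tau>"
  have \<theta>: "0 \<le> \<theta>" "\<theta> * \<tau> = t" using t \<tau> by (auto simp: \<theta>_def)
  define f where "f k = ((t^k / fact k) *\<^sub>R P k - \<theta> *\<^sub>R ((\<tau>^k / fact k) *\<^sub>R P k))
      - (if k = 0 then (1 - \<theta>) *\<^sub>R P 0 else 0)" for k
  have fs: "f sums (St - \<theta> *\<^sub>R S\<tau> - (1 - \<theta>) *\<^sub>R P 0)"
    unfolding f_def by (intro sums_diff St sums_scaleR_right S\<tau> sums_single)
  define g where "g k = \<theta> * K * (if k < 2 then 0 else (\<tau> * L)^k / fact k)" for k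
  have gs: "g sums (\<theta> * K * (exp (\<tau> * L) - 1 - \<tau> * L))"
    unfolding g_def by (intro sums_mult exp_tail_sums)
  have fg: "infnorm (f k) \<le> g k" for k
  proof (cases "k < 2")
    case True
    then consider "k = 0" | "k = 1" by linarith
    then show ?thesis
    proof cases
      case 1 then show ?thesis by (simp add: f_def g_def infnorm_0 algebra_simps)
    next
      case 2
      have "f k = (t - \<theta> * \<tau>) *\<^sub>R P 1" using 2 by (simp add: f_def algebra_simps)
      then show ?thesis using 2 \<theta> by (simp add: g_def infnorm_0)
    qed
  next
    case False
    then have k: "k \<ge> 2" "k \<ge> 1" by auto
    have fk: "f k = ((t^k - \<theta> * \<tau>^k) / fact k) *\<^sub>R P k"
      using k by (simp add: f_def algebra_simps diff_divide_distrib)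
    have tk: "t^k \<le> \<theta> * \<tau>^k"
    proof -
      have "t^k = t * t^(k-1)" using k by (simp add: power_eq_if)
      also have "\<dots> \<le> t * \<tau>^(k-1)" using t by (intro mult_left_mono power_mono) auto
      also have "\<dots> = \<theta> * \<tau>^k" using k \<theta> by (simp add: power_eq_if mult.assoc[symmetric])
      finally show ?thesis .
    qed
    have abs: "\<bar>(t^k - \<theta> * \<tau>^k) / fact k\<bar> \<le> \<theta> * \<tau>^k / fact k"
    proof -
      have a1: "\<bar>t^k - \<theta> * \<tau>^k\<bar> \<le> \<theta> * \<tau>^k" using tk zero_le_power[OF t(1), of k] by (auto simp: abs_le_iff)
      have "\<bar>(t^k - \<theta> * \<tau>^k) / fact k\<bar> = \<bar>t^k - \<theta> * \<tau>^k\<bar> / fact k" by (simp add: abs_divide)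
      also have "\<dots> \<le> \<theta> * \<tau>^k / fact k" using a1 by (intro divide_right_mono) auto
      finally show ?thesis .
    qed
    have "infnorm (f k) = \<bar>(t^k - \<theta> * \<tau>^k) / fact k\<bar> * infnorm (P k)" by (simp add: fk infnorm_mul)
    also have "\<dots> \<le> (\<theta> * \<tau>^k / fact k) * (K * L^k)"
      using abs PK[OF k(1)] \<theta>(1) \<tau> by (intro mult_mono) (auto simp: infnorm_pos_le)
    also have "\<dots> = g k" using False by (simp add: g_def power_mult_distrib)
    finally show ?thesis .
  qed
  have "infnorm (St - \<theta> *\<^sub>R S\<tau> - (1 - \<theta>) *\<^sub>R P 0) \<le> suminf g"
    by (rule infnorm_suminf_bound[OF fs sums_summable[OF gs] fg])
  then show ?thesis using sums_unique[OF gs] by (simp add: \<theta>_def)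
qed

lemma psi_convex:
  fixes L :: real
  assumes t: "0 \<le> t" "t \<le> \<tau>" and \<tau>: "\<tau> > 0"
  shows "exp (t * L) - 1 - t * L \<le> (t / \<tau>) * (exp (\<tau> * L) - 1 - \<tau> * L)"
proof -
  define \<theta> where "\<theta> = t / \<tau>"
  have \<theta>: "0 \<le> \<theta>" "\<theta> \<le> 1" "\<theta> * \<tau> = t" using t \<tau> by (auto simp: \<theta>_def)
  have c1: "exp ((1 - \<theta>) *\<^sub>R 0 + \<theta> *\<^sub>R (\<tau> * L)) \<le> (1 - \<theta>) * exp 0 + \<theta> * exp (\<tau> * L)"
    by (rule convex_onD[OF exp_convex \<theta>(1,2)]) auto
  have eq: "(1 - \<theta>) *\<^sub>R 0 + \<theta> *\<^sub>R (\<tau> * L) = t * L" using \<theta> by (simp add: mult.assoc[symmetric])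
  have "exp (t * L) \<le> 1 - \<theta> + \<theta> * exp (\<tau> * L)" using c1 unfolding eq by simp
  then show ?thesis using \<theta> unfolding \<theta>_def[symmetric] by (simp add: algebra_simps mult.assoc[symmetric])
qed

lemma sup_infnorm:
  fixes S :: "(real^'n) set"
  assumes "compact S" "y \<in> S"
  shows "infnorm y \<le> Sup (infnorm ` S)" "0 \<le> Sup (infnorm ` S)"
proof -
  obtain B where B: "\<And>z. z \<in> S \<Longrightarrow> norm z \<le> B"
    using compact_imp_bounded[OF assms(1)] unfolding bounded_iff by blast
  have bdd: "bdd_above (infnorm ` S)"
    unfolding bdd_above_def using B infnorm_le_norm order_trans by blast
  show 1: "infnorm y \<le> Sup (infnorm ` S)" using assms(2) by (intro cSup_upper bdd) auto
  show "0 \<le> Sup (infnorm ` S)" using 1 infnorm_pos_le[of y] by linarith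
qed

lemma in_box: "infnorm (v::real^'n) \<le> r \<Longrightarrow> v \<in> box_set (r *\<^sub>R ones)"
  unfolding box_set_def ones_def using component_le_infnorm_cart order_trans by fastforce

theorem proposition1:
  fixes A :: "real^'n^'n" and b :: "real^'n" and U X0 :: "(real^'n) set" and \<tau> :: real
  assumes "A \<noteq> 0" and "compact U" and "convex U" and "compact X0" and "convex X0"
    and "\<tau> \<ge> 0"
  defines "c \<equiv> exp (\<tau> * mat_infnorm A) - 1 - \<tau> * mat_infnorm A"
  defines "\<alpha> \<equiv> (c * Sup (infnorm ` X0)) *\<^sub>R ones"
    and "\<beta> \<equiv> (c / mat_infnorm A * Sup (infnorm ` U)) *\<^sub>R ones"
    and "\<gamma> \<equiv> (c / mat_infnorm A * infnorm b) *\<^sub>R ones"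
    and "G \<equiv> integral {0..\<tau>} (\<lambda>t. mat_exp A (\<tau> - t))"
  defines "Y \<equiv> {mat_exp A \<tau> *v x + G *v b + \<tau> *\<^sub>R u + w | x u w.
                  x \<in> X0 \<and> u \<in> U \<and> w \<in> box_set \<beta>}"
  shows "reach A b U X0 \<tau> \<subseteq> Y \<and>
     reach_interval A b U X0 \<tau> \<subseteq> CH X0 {y + w | y w. y \<in> Y \<and> w \<in> box_set (\<alpha> + \<gamma>)}"
proof -
  define L where "L = mat_infnorm A"
  have L: "L > 0" unfolding L_def using assms(1) by (rule mat_infnorm_pos)
  have Ucl: "closed U" using assms(2) by (rule compact_imp_closed)
  define MU where "MU = Sup (infnorm ` U)"
  define MX where "MX = Sup (infnorm ` X0)"
  have c0: "c \<ge> 0" unfolding c_def using exp_ge_add_one_self[of "\<tau> * mat_infnorm A"] by linarith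
  have Geq: "G *v b = psum A b \<tau>" unfolding G_def using G_eq[OF L[unfolded L_def] assms(6)] .
  have \<beta>eq: "\<beta> = (c / L * MU) *\<^sub>R ones" by (simp add: \<beta>_def L_def MU_def)
  have \<alpha>\<gamma>eq: "\<alpha> + \<gamma> = (c * MX + c / L * infnorm b) *\<^sub>R ones"
    by (simp add: \<alpha>_def \<gamma>_def L_def MX_def scaleR_add_left)
  have sol_facts: "x 0 \<in> X0" "u 0 \<in> U" "MU \<ge> 0" "\<And>y. y \<in> U \<Longrightarrow> infnorm y \<le> MU"
    if sol: "is_solution A b U X0 t x u" and t: "t \<ge> 0" for x u t
  proof -
    show "x 0 \<in> X0" "u 0 \<in> U" using sol t unfolding is_solution_def by auto
    then show "MU \<ge> 0" "\<And>y. y \<in> U \<Longrightarrow> infnorm y \<le> MU"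
      unfolding MU_def using sup_infnorm[OF assms(2)] by auto
  qed
  have part1: "reach A b U X0 \<tau> \<subseteq> Y"
  proof
    fix z assume "z \<in> reach A b U X0 \<tau>"
    then obtain x u where z: "z = x \<tau>" and sol: "is_solution A b U X0 \<tau> x u"
      unfolding reach_def by blast
    note sf = sol_facts[OF sol assms(6)]
    obtain u' e where u': "u' \<in> U" and xe: "x \<tau> = mat_exp A \<tau> *v x 0 + psum A b \<tau> + \<tau> *\<^sub>R u' + e"
      and eb: "infnorm e \<le> MU / mat_infnorm A * (exp (\<tau> * mat_infnorm A) - 1 - \<tau> * mat_infnorm A)"
      using core[OF L[unfolded L_def] sf(3) sf(4) assms(3) Ucl assms(6) sol] by blast
    have "e \<in> box_set \<beta>"
      unfolding \<beta>eq by (rule in_box) (use eb in \<open>simp add: c_def L_def mult.commute[of MU]\<close>)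
    then show "z \<in> Y" unfolding Y_def z xe Geq using sf(1) u'
      by (intro CollectI exI[of _ "x 0"] exI[of _ u'] exI[of _ e] conjI refl)
  qed
  have part2: "reach_interval A b U X0 \<tau> \<subseteq> CH X0 {y + w | y w. y \<in> Y \<and> w \<in> box_set (\<alpha> + \<gamma>)}"
  proof
    fix z assume "z \<in> reach_interval A b U X0 \<tau>"
    then obtain t where t: "t \<in> {0..\<tau>}" and "z \<in> reach A b U X0 t" unfolding reach_interval_def by blast
    then obtain x u where z: "z = x t" and sol: "is_solution A b U X0 t x u"
      unfolding reach_def by blast
    have t0: "t \<ge> 0" using t by auto
    note sf = sol_facts[OF sol t0]
    obtain u' e where u': "u' \<in> U" and xe: "x t = mat_exp A t *v x 0 + psum A b t + t *\<^sub>R u' + e"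
      and eb: "infnorm e \<le> MU / mat_infnorm A * (exp (t * mat_infnorm A) - 1 - t * mat_infnorm A)"
      using core[OF L[unfolded L_def] sf(3) sf(4) assms(3) Ucl t0 sol] by blast
    show "z \<in> CH X0 {y + w | y w. y \<in> Y \<and> w \<in> box_set (\<alpha> + \<gamma>)}"
    proof (cases "t = 0")
      case True
      have zx: "z = x 0" using z True by simp
      have "0 \<in> box_set \<beta>" unfolding \<beta>eq
        by (rule in_box) (use c0 L sf(3) in \<open>simp add: infnorm_0\<close>)
      then have y0: "mat_exp A \<tau> *v x 0 + G *v b + \<tau> *\<^sub>R u 0 + 0 \<in> Y"
        unfolding Y_def using sf(1,2) by (intro CollectI exI[of _ "x 0"] exI[of _ "u 0"] exI[of _ 0] conjI refl)
      have "0 \<in> box_set (\<alpha> + \<gamma>)" unfolding \<alpha>\<gamma>eq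
        by (rule in_box) (use c0 L sup_infnorm(2)[OF assms(4) sf(1)] in \<open>simp add: infnorm_0 MX_def infnorm_pos_le\<close>)
      with y0 have "(mat_exp A \<tau> *v x 0 + G *v b + \<tau> *\<^sub>R u 0 + 0) + 0 \<in> {y + w | y w. y \<in> Y \<and> w \<in> box_set (\<alpha> + \<gamma>)}"
        by (intro CollectI exI[of _ "mat_exp A \<tau> *v x 0 + G *v b + \<tau> *\<^sub>R u 0 + 0"] exI[of _ 0] conjI refl)
      then show ?thesis unfolding CH_def zx using sf(1)
        by (intro CollectI exI[of _ "1::real"] exI[of _ "x 0"] exI[of _ "(mat_exp A \<tau> *v x 0 + G *v b + \<tau> *\<^sub>R u 0 + 0) + 0"]) simp
    next
      case False
      then have tp: "t > 0" using t0 by auto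
      then have \<tau>p: "\<tau> > 0" using t by auto
      define \<theta> where "\<theta> = t / \<tau>"
      have \<theta>: "0 < \<theta>" "\<theta> \<le> 1" "\<theta> * \<tau> = t" using tp \<tau>p t by (auto simp: \<theta>_def)
      define x0 where "x0 = x 0"
      define Dx where "Dx = mat_exp A t *v x0 - \<theta> *\<^sub>R (mat_exp A \<tau> *v x0) - (1 - \<theta>) *\<^sub>R x0"
      define Dp where "Dp = psum A b t - \<theta> *\<^sub>R psum A b \<tau> - (1 - \<theta>) *\<^sub>R pterm A b 0"
      have Dx_b: "infnorm Dx \<le> \<theta> * infnorm x0 * c"
      proof -
        have s1: "(\<lambda>k. (s^k / fact k) *\<^sub>R (mat_pow A k *v x0)) sums (mat_exp A s *v x0)" for s
          unfolding mat_exp_apply by (rule summable_sums[OF mat_exp_vec_summable])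
        have "infnorm (mat_exp A t *v x0 - (t / \<tau>) *\<^sub>R (mat_exp A \<tau> *v x0) - (1 - t / \<tau>) *\<^sub>R (mat_pow A 0 *v x0))
              \<le> (t / \<tau>) * infnorm x0 * (exp (\<tau> * L) - 1 - \<tau> * L)"
          by (rule interp_bound[OF s1 s1 t0 _ \<tau>p less_imp_le[OF L] infnorm_pos_le])
             (use t mat_pow_bound in \<open>auto simp: L_def mult.commute\<close>)
        then have "infnorm Dx \<le> (t / \<tau>) * infnorm x0 * (exp (\<tau> * L) - 1 - \<tau> * L)"
          by (simp add: Dx_def \<theta>_def)
        then show ?thesis by (simp add: \<theta>_def c_def L_def)
      qed
      have Dp_b: "infnorm Dp \<le> \<theta> * (infnorm b / L) * c"
      proof -
        have s1: "(\<lambda>k. (s^k / fact k) *\<^sub>R pterm A b k) sums (psum A b s)" for s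
          unfolding psum_def by (rule summable_sums[OF psum_summable[OF L[unfolded L_def]]])
        have PK: "infnorm (pterm A b k) \<le> infnorm b / L * L ^ k" if k: "k \<ge> 2" for k
        proof -
          obtain j where j: "k = Suc j" using k by (cases k) auto
          have "infnorm (pterm A b k) \<le> L ^ j * infnorm b"
            using mat_pow_bound[of A j b] by (simp add: pterm_def j L_def)
          also have "\<dots> = infnorm b / L * L ^ k" using L by (simp add: j)
          finally show ?thesis .
        qed
        have "infnorm Dp \<le> (t / \<tau>) * (infnorm b / L) * (exp (\<tau> * L) - 1 - \<tau> * L)"
          unfolding Dp_def \<theta>_def
          by (rule interp_bound[OF s1 s1 t0 _ \<tau>p less_imp_le[OF L] _ PK])
             (use t L in \<open>auto simp: infnorm_pos_le\<close>)
        then show ?thesis by (simp add: \<theta>_def c_def L_def)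
      qed
      have e_b: "infnorm e \<le> \<theta> * (c / L * MU)"
      proof -
        have "exp (t * L) - 1 - t * L \<le> (t / \<tau>) * (exp (\<tau> * L) - 1 - \<tau> * L)"
          using t \<tau>p by (intro psi_convex) auto
        then have "MU / L * (exp (t * L) - 1 - t * L) \<le> MU / L * ((t / \<tau>) * (exp (\<tau> * L) - 1 - \<tau> * L))"
          using sf(3) L by (intro mult_left_mono) auto
        then show ?thesis using eb by (simp add: \<theta>_def c_def L_def mult_ac)
      qed
      define w where "w = (1 / \<theta>) *\<^sub>R e"
      define w' where "w' = (1 / \<theta>) *\<^sub>R (Dx + Dp)"
      have w_box: "w \<in> box_set \<beta>"
        unfolding \<beta>eq w_def
        by (rule in_box) (use e_b \<theta> in \<open>simp add: infnorm_mul field_simps\<close>)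
      have w'_box: "w' \<in> box_set (\<alpha> + \<gamma>)"
        unfolding \<alpha>\<gamma>eq w'_def
      proof (rule in_box)
        have "infnorm x0 \<le> MX" unfolding MX_def x0_def using sup_infnorm(1)[OF assms(4) sf(1)] .
        then have "infnorm x0 * c \<le> MX * c" using c0 by (intro mult_right_mono)
        then have h1: "\<theta> * infnorm x0 * c \<le> \<theta> * MX * c"
          using \<theta>(1) by (simp add: mult.assoc mult_left_mono)
        have h2: "\<theta> * (infnorm b / L) * c = \<theta> * (c / L * infnorm b)" by simp
        have h3: "\<theta> * (c * MX + c / L * infnorm b) = \<theta> * MX * c + \<theta> * (c / L * infnorm b)"
          by (simp add: algebra_simps)
        have "infnorm (Dx + Dp) \<le> \<theta> * (c * MX + c / L * infnorm b)"
          using infnorm_triangle[of Dx Dp] Dx_b Dp_b h1 h2 h3 by linarith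
        then have "(1 / \<theta>) * infnorm (Dx + Dp) \<le> (1 / \<theta>) * (\<theta> * (c * MX + c / L * infnorm b))"
          using \<theta>(1) by (intro mult_left_mono) auto
        moreover have "infnorm ((1 / \<theta>) *\<^sub>R (Dx + Dp)) = (1 / \<theta>) * infnorm (Dx + Dp)"
          unfolding infnorm_mul using \<theta>(1) by simp
        moreover have "(1 / \<theta>) * (\<theta> * (c * MX + c / L * infnorm b)) = c * MX + c / L * infnorm b"
          using \<theta>(1) by simp
        ultimately show "infnorm ((1 / \<theta>) *\<^sub>R (Dx + Dp)) \<le> c * MX + c / L * infnorm b" by simp
      qed
      define y where "y = mat_exp A \<tau> *v x0 + G *v b + \<tau> *\<^sub>R u' + w"
      have yY: "y \<in> Y" unfolding Y_def y_def x0_def using sf(1) u' w_box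
        by (intro CollectI exI[of _ "x 0"] exI[of _ u'] exI[of _ w] conjI refl)
      have zeq: "z = (1 - \<theta>) *\<^sub>R x0 + (1 - (1 - \<theta>)) *\<^sub>R (y + w')"
      proof -
        have "(1 - (1 - \<theta>)) *\<^sub>R (y + w') = \<theta> *\<^sub>R (mat_exp A \<tau> *v x0) + \<theta> *\<^sub>R psum A b \<tau> + (\<theta> * \<tau>) *\<^sub>R u' + e + (Dx + Dp)"
          using \<theta>(1) by (simp add: y_def w_def w'_def Geq scaleR_add_right)
        also have "\<dots> = mat_exp A t *v x0 + psum A b t + t *\<^sub>R u' + e - (1 - \<theta>) *\<^sub>R x0"
          unfolding Dx_def Dp_def \<theta>(3) by (simp add: pterm_def algebra_simps)
        finally show ?thesis using z xe by (simp add: x0_def)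
      qed
      have yw: "y + w' \<in> {y + w | y w. y \<in> Y \<and> w \<in> box_set (\<alpha> + \<gamma>)}"
        by (intro CollectI exI[of _ y] exI[of _ w'] conjI refl yY w'_box)
      have l01: "0 \<le> 1 - \<theta>" "1 - \<theta> \<le> 1" using \<theta> by auto
      show ?thesis unfolding CH_def
      proof (rule CollectI, rule exI[of _ "1 - \<theta>"], rule exI[of _ "x 0"], rule exI[of _ "y + w'"], intro conjI)
        show "z = (1 - \<theta>) *\<^sub>R x 0 + (1 - (1 - \<theta>)) *\<^sub>R (y + w')" using zeq by (simp only: x0_def)
      qed (use yw sf(1) l01 in auto)
    qed
  qed
  show ?thesis using part1 part2 by blast
qed

end
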